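(* Let $\mathcal C\in\{\mathbb{H},\mathbb{O}\}$, $F\in\{\mathbb{R},\mathbb{C}\}$ and $n\ge2$. Then $\triangle_{\mathcal C}\otimes1^{\otimes(n-2)}$ commutes and associates with all elements of $\mathrm{Sym}^n\mathcal C_F$. In particular, $\triangle^{(n)}_{\mathcal C}$ lies in the center of $\mathrm{Sym}^n\mathcal C_F$ (i.e. commutes and associates with all its elements), and hence $F[\triangle^{(n)}_{\mathcal C}]$ is a commutative and associative $F$-algebra.
   Context: $\mathbb{O}$ is the Cayley octonion algebra over $\mathbb{R}$ with basis $e_0=1,e_1,\dots,e_7$; $1,e_1,e_2,e_3$ span the quaternion subalgebra $\mathbb{H}$ ($e_i^2=-1$, $e_1e_2=-e_2e_1=e_3$, $e_2e_3=-e_3e_2=e_1$, $e_3e_1=-e_1e_3=e_2$), and $\mathbb{O}=\mathbb{H}\oplus\mathbb{H}e_4$ is the Cayley–Dickson double ($e_4^2=-1$, $e_{i+4}=e_ie_4$, $(x+ye_4)(z+we_4)=(xz-\bar wy)+(wx+y\bar z)e_4$). $\mathcal C_F=\mathcal C\otimes_\mathbb{R}F$; $\mathcal C_F^{\otimes n}$ is the tensor power over $F$ with componentwise multiplication; $\mathfrak S_n$ acts by $\sigma(x_1\otimes\cdots\otimes x_n)=x_{\sigma^{-1}(1)}\otimes\cdots\otimes x_{\sigma^{-1}(n)}$; $x^\vee=\frac1{n!}\sum_\sigma\sigma(x)$; $\mathrm{Sym}^n\mathcal C_F$ is the algebra of $\mathfrak S_n$-fixed tensors. With $d=\dim_\mathbb{R}\mathcal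 C$, $\triangle_{\mathcal C}=\frac1d\sum_{i=0}^{d-1}e_i\otimes e_i$ and $\triangle^{(n)}_{\mathcal C}=(\triangle_{\mathcal C}\otimes1^{\otimes(n-2)})^\vee$. An element $z$ commutes and associates with $x$ (for all $y$) if $zx=xz$ and $(zx)y=z(xy)$, $(xz)y=x(zy)$, $(xy)z=x(yz)$. *)

theory Defs
  imports "HOL-Combinatorics.Permutations" Complex_Main
begin

text \<open>Elements of C_F (C = H or O, F = R or C) are coefficient vectors
  nat => F with respect to the basis e_0 = 1, e_1, ..., e_(d-1); coordinates at
  indices >= d are 0.\<close>

datatype cd_alg = Quat | Oct

fun dim :: "cd_alg \<Rightarrow> nat" where
  "dim Quat = 4" | "dim Oct = 8"

text \<open>Hamilton product: e_i^2 = -1, e1 e2 = e3, e2 e3 = e1, e3 e1 = e2 (anticommuting).\<close>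
definition qmul :: "(nat \<Rightarrow> 'a::comm_ring_1) \<Rightarrow> (nat \<Rightarrow> 'a) \<Rightarrow> nat \<Rightarrow> 'a" where
  "qmul a b = (\<lambda>k.
     if k = 0 then a 0 * b 0 - a 1 * b 1 - a 2 * b 2 - a 3 * b 3
     else if k = 1 then a 0 * b 1 + a 1 * b 0 + a 2 * b 3 - a 3 * b 2
     else if k = 2 then a 0 * b 2 - a 1 * b 3 + a 2 * b 0 + a 3 * b 1
     else if k = 3 then a 0 * b 3 + a 1 * b 2 - a 2 * b 1 + a 3 * b 0
     else 0)"

definition qconj :: "(nat \<Rightarrow> 'a::comm_ring_1) \<Rightarrow> nat \<Rightarrow> 'a" where
  "qconj a = (\<lambda>k. if k = 0 then a 0 else if k < 4 then - a k else 0)"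

definition lo_part :: "(nat \<Rightarrow> 'a::comm_ring_1) \<Rightarrow> nat \<Rightarrow> 'a" where
  "lo_part v = (\<lambda>k. if k < 4 then v k else 0)"

definition hi_part :: "(nat \<Rightarrow> 'a::comm_ring_1) \<Rightarrow> nat \<Rightarrow> 'a" where
  "hi_part v = (\<lambda>k. if k < 4 then v (k + 4) else 0)"

text \<open>Cayley--Dickson double: (x + y e4)(z + w e4) = (xz - conj(w) y) + (w x + y conj(z)) e4,
  with e_(i+4) = e_i e_4, so x = coordinates 0..3 and y = coordinates 4..7.\<close>
definition omul :: "(nat \<Rightarrow> 'a::comm_ring_1) \<Rightarrow> (nat \<Rightarrow> 'a) \<Rightarrow> nat \<Rightarrow> 'a" where
  "omul a b = (\<lambda>k.
     if k < 4 then qmul (lo_part a) (lo_part b) k - qmul (qconj (hi_part b)) (hi_part a) k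
     else if k < 8 then qmul (hi_part b) (lo_part a) (k - 4) + qmul (hi_part a) (qconj (lo_part b)) (k - 4)
     else 0)"

fun cmul :: "cd_alg \<Rightarrow> (nat \<Rightarrow> 'a::comm_ring_1) \<Rightarrow> (nat \<Rightarrow> 'a) \<Rightarrow> nat \<Rightarrow> 'a" where
  "cmul Quat a b = qmul a b"
| "cmul Oct a b = omul a b"

definition bvec :: "nat \<Rightarrow> nat \<Rightarrow> 'a::comm_ring_1" where
  "bvec i = (\<lambda>k. if k = i then 1 else 0)"

text \<open>C_F^{\<otimes>n}: coefficient functions on index lists I = (i_1,...,i_n), i_k < d,
  i.e. coordinates w.r.t. the basis e_(i_1) \<otimes> ... \<otimes> e_(i_n).\<close>
definition valid_idx :: "cd_alg \<Rightarrow> nat \<Rightarrow> nat list set" where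
  "valid_idx C n = {I. length I = n \<and> set I \<subseteq> {..<dim C}}"

definition tensor_space :: "cd_alg \<Rightarrow> nat \<Rightarrow> (nat list \<Rightarrow> 'a::comm_ring_1) set" where
  "tensor_space C n = {x. \<forall>K. K \<notin> valid_idx C n \<longrightarrow> x K = 0}"

text \<open>Componentwise multiplication, extended bilinearly:
  (e_I)(e_J) = (e_(i_1) e_(j_1)) \<otimes> ... \<otimes> (e_(i_n) e_(j_n)).\<close>
definition tmul :: "cd_alg \<Rightarrow> nat \<Rightarrow> (nat list \<Rightarrow> 'a::comm_ring_1) \<Rightarrow> (nat list \<Rightarrow> 'a) \<Rightarrow> nat list \<Rightarrow> 'a" where
  "tmul C n x y = (\<lambda>K. if K \<in> valid_idx C n then
      (\<Sum>I\<in>valid_idx C n. \<Sum>J\<in>valid_idx C n.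
          x I * y J * (\<Prod>k<n. cmul C (bvec (I ! k)) (bvec (J ! k)) (K ! k)))
    else 0)"

definition pure_tensor :: "cd_alg \<Rightarrow> nat \<Rightarrow> (nat \<Rightarrow> 'a::comm_ring_1) list \<Rightarrow> nat list \<Rightarrow> 'a" where
  "pure_tensor C n vs = (\<lambda>K. if K \<in> valid_idx C n then (\<Prod>k<n. (vs ! k) (K ! k)) else 0)"

text \<open>Action of a permutation sigma of {0..n-1}:
  sigma(x_1 \<otimes> ... \<otimes> x_n) = x_(sigma^-1 1) \<otimes> ... \<otimes> x_(sigma^-1 n);
  on coordinates (sigma x)(K) = x(K o sigma).\<close>
definition perm_act :: "cd_alg \<Rightarrow> nat \<Rightarrow> (nat \<Rightarrow> nat) \<Rightarrow> (nat list \<Rightarrow> 'a::comm_ring_1) \<Rightarrow> nat list \<Rightarrow> 'a" where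
  "perm_act C n \<sigma> x = (\<lambda>K. if K \<in> valid_idx C n then x (map (\<lambda>k. K ! \<sigma> k) [0..<n]) else 0)"

definition sym_space :: "cd_alg \<Rightarrow> nat \<Rightarrow> (nat list \<Rightarrow> 'a::comm_ring_1) set" where
  "sym_space C n = {x \<in> tensor_space C n. \<forall>\<sigma>. \<sigma> permutes {..<n} \<longrightarrow> perm_act C n \<sigma> x = x}"

definition symmetrize :: "cd_alg \<Rightarrow> nat \<Rightarrow> (nat list \<Rightarrow> 'a::field_char_0) \<Rightarrow> nat list \<Rightarrow> 'a" where
  "symmetrize C n x = (\<lambda>K. (1 / of_nat (fact n)) *
      (\<Sum>\<sigma>\<in>{\<sigma>. \<sigma> permutes {..<n}}. perm_act C n \<sigma> x K))"

definition delta_one :: "cd_alg \<Rightarrow> nat \<Rightarrow> nat list \<Rightarrow> 'a::field_char_0" where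
  "delta_one C n = (\<lambda>K. (1 / of_nat (dim C)) *
      (\<Sum>i<dim C. pure_tensor C n ([bvec i, bvec i] @ replicate (n - 2) (bvec 0)) K))"

definition delta_n :: "cd_alg \<Rightarrow> nat \<Rightarrow> nat list \<Rightarrow> 'a::field_char_0" where
  "delta_n C n = symmetrize C n (delta_one C n)"

definition comm_assoc :: "cd_alg \<Rightarrow> nat \<Rightarrow> (nat list \<Rightarrow> 'a::comm_ring_1) \<Rightarrow> (nat list \<Rightarrow> 'a)
    \<Rightarrow> (nat list \<Rightarrow> 'a) set \<Rightarrow> bool" where
  "comm_assoc C n z x Y \<longleftrightarrow> tmul C n z x = tmul C n x z \<and>
     (\<forall>y\<in>Y. tmul C n (tmul C n z x) y = tmul C n z (tmul C n x y)
          \<and> tmul C n (tmul C n x z) y = tmul C n x (tmul C n z y)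
          \<and> tmul C n (tmul C n x y) z = tmul C n x (tmul C n y z))"

inductive_set gen_alg :: "cd_alg \<Rightarrow> nat \<Rightarrow> (nat list \<Rightarrow> 'a::comm_ring_1) \<Rightarrow> (nat list \<Rightarrow> 'a) set"
  for C n z where
  gen_one: "pure_tensor C n (replicate n (bvec 0)) \<in> gen_alg C n z"
| gen_base: "z \<in> gen_alg C n z"
| gen_add: "a \<in> gen_alg C n z \<Longrightarrow> b \<in> gen_alg C n z \<Longrightarrow> (\<lambda>K. a K + b K) \<in> gen_alg C n z"
| gen_smult: "a \<in> gen_alg C n z \<Longrightarrow> (\<lambda>K. c * a K) \<in> gen_alg C n z"
| gen_mult: "a \<in> gen_alg C n z \<Longrightarrow> b \<in> gen_alg C n z \<Longrightarrow> tmul C n a b \<in> gen_alg C n z"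

end

theory Submission
  imports Defs
begin

abbreviation cc :: "cd_alg \<Rightarrow> nat \<Rightarrow> nat \<Rightarrow> nat \<Rightarrow> 'a::comm_ring_1" where
  "cc C i j m \<equiv> cmul C (bvec i) (bvec j) m"

lemma valid_Nil[simp]: "valid_idx C 0 = {[]}"
  by (auto simp: valid_idx_def)

lemma Cons_valid[simp]: "(c # K \<in> valid_idx C (Suc m)) \<longleftrightarrow> c < dim C \<and> K \<in> valid_idx C m"
  by (auto simp: valid_idx_def)

lemma Nil_valid_Suc[simp]: "[] \<notin> valid_idx C (Suc m)"
  by (auto simp: valid_idx_def)

lemma valid_Suc: "valid_idx C (Suc m) = (\<lambda>(a,R). a # R) ` ({..<dim C} \<times> valid_idx C m)"
proof
  show "valid_idx C (Suc m) \<subseteq> (\<lambda>(a,R). a # R) ` ({..<dim C} \<times> valid_idx C m)"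
  proof
    fix K assume "K \<in> valid_idx C (Suc m)"
    then obtain a R where "K = a # R" by (cases K) auto
    with \<open>K \<in> valid_idx C (Suc m)\<close> show "K \<in> (\<lambda>(a,R). a # R) ` ({..<dim C} \<times> valid_idx C m)"
      by (auto intro!: image_eqI[where x="(a,R)"])
  qed
qed auto

lemma finite_valid[simp]: "finite (valid_idx C m)"
  by (induction m) (auto simp: valid_Suc)

lemma sum_valid_Suc:
  "sum f (valid_idx C (Suc m)) = (\<Sum>a<dim C. \<Sum>R\<in>valid_idx C m. f (a # R))"
proof -
  have inj: "inj_on (\<lambda>(a,R). a # R) ({..<dim C} \<times> valid_idx C m)"
    by (auto simp: inj_on_def)
  have "sum f (valid_idx C (Suc m)) = sum (f \<circ> (\<lambda>(a,R). a # R)) ({..<dim C} \<times> valid_idx C m)"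
    unfolding valid_Suc by (rule sum.reindex[OF inj])
  also have "\<dots> = (\<Sum>a<dim C. \<Sum>R\<in>valid_idx C m. f (a # R))"
    by (simp add: sum.cartesian_product o_def case_prod_unfold)
  finally show ?thesis .
qed

lemma tmul_out: "K \<notin> valid_idx C n \<Longrightarrow> tmul C n x y K = 0"
  by (simp add: tmul_def)

lemma tmul_in: "K \<in> valid_idx C n \<Longrightarrow> tmul C n x y K =
   (\<Sum>I\<in>valid_idx C n. \<Sum>J\<in>valid_idx C n. x I * y J * (\<Prod>k<n. cc C (I ! k) (J ! k) (K ! k)))"
  by (simp add: tmul_def)

lemma prod_Cons3: "(\<Prod>k<Suc m. cc C ((a#I) ! k) ((b#J) ! k) ((c#K) ! k)) =
   cc C a b c * (\<Prod>k<m. cc C (I ! k) (J ! k) (K ! k))"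
  by (simp only: prod.lessThan_Suc_shift) simp

lemma tmul_Suc:
  assumes "c < dim C" "K \<in> valid_idx C m"
  shows "tmul C (Suc m) x y (c # K) =
    (\<Sum>a<dim C. \<Sum>b<dim C. cc C a b c * tmul C m (\<lambda>I. x (a # I)) (\<lambda>J. y (b # J)) K)"
proof -
  have "tmul C (Suc m) x y (c # K) =
     (\<Sum>a<dim C. \<Sum>I\<in>valid_idx C m. \<Sum>b<dim C. \<Sum>J\<in>valid_idx C m.
        x (a#I) * y (b#J) * (cc C a b c * (\<Prod>k<m. cc C (I ! k) (J ! k) (K ! k))))"
    using assms by (subst tmul_in) (simp_all only: Cons_valid sum_valid_Suc prod_Cons3 simp_thms)
  also have "\<dots> = (\<Sum>a<dim C. \<Sum>b<dim C. \<Sum>I\<in>valid_idx C m. \<Sum>J\<in>valid_idx C m.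
        cc C a b c * (x (a#I) * y (b#J) * (\<Prod>k<m. cc C (I ! k) (J ! k) (K ! k))))"
    by (rule sum.cong[OF refl], subst sum.swap) (simp add: algebra_simps)
  also have "\<dots> = (\<Sum>a<dim C. \<Sum>b<dim C. cc C a b c * tmul C m (\<lambda>I. x (a # I)) (\<lambda>J. y (b # J)) K)"
    using assms by (simp add: tmul_in sum_distrib_left)
  finally show ?thesis .
qed

lemma sum8: "(\<Sum>m<(8::nat). f m) = f 0 + f 1 + f 2 + f 3 + f 4 + f 5 + f 6 + (f 7::'a::comm_monoid_add)"
  by (simp add: numeral_eq_Suc add.assoc add.commute add.left_commute)
lemma sum4: "(\<Sum>m<(4::nat). f m) = f 0 + f 1 + f 2 + (f 3::'a::comm_monoid_add)"
  by (simp add: numeral_eq_Suc add.assoc add.commute add.left_commute)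

definition ip :: "cd_alg \<Rightarrow> (nat \<Rightarrow> 'a::comm_ring_1) \<Rightarrow> (nat \<Rightarrow> 'a) \<Rightarrow> 'a" where
  "ip C u v = (\<Sum>m<dim C. u m * v m)"

lemma genI2:
  fixes a b c e :: "nat \<Rightarrow> 'a::idom"
  shows "(\<Sum>m<dim C. cmul C a c m * cmul C b e m + cmul C a e m * cmul C b c m)
       = 2 * ip C a b * ip C c e"
proof (cases C)
  case Quat show ?thesis
  unfolding ip_def Quat by (simp add: sum4 qmul_def) algebra
next
  case Oct show ?thesis
  unfolding ip_def Oct by (simp add: sum8 omul_def qmul_def lo_part_def hi_part_def qconj_def) algebra
qed

lemma genI1L:
  fixes p q u v :: "nat \<Rightarrow> 'a::idom"
  shows "(\<Sum>i<dim C. ip C (cmul C (bvec i) p) u * ip C (cmul C (bvec i) q) v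
             + ip C (cmul C (bvec i) q) u * ip C (cmul C (bvec i) p) v) = 2 * ip C p q * ip C u v"
proof (cases C)
  case Quat show ?thesis
  unfolding ip_def Quat by (simp add: sum4 qmul_def bvec_def) algebra
next
  case Oct show ?thesis
  unfolding ip_def Oct by (simp add: sum8 omul_def qmul_def lo_part_def hi_part_def qconj_def bvec_def) algebra
qed

lemma genI1R:
  fixes p q u v :: "nat \<Rightarrow> 'a::idom"
  shows "(\<Sum>i<dim C. ip C (cmul C p (bvec i)) u * ip C (cmul C q (bvec i)) v
             + ip C (cmul C q (bvec i)) u * ip C (cmul C p (bvec i)) v) = 2 * ip C p q * ip C u v"
proof (cases C)
  case Quat show ?thesis
  unfolding ip_def Quat by (simp add: sum4 qmul_def bvec_def) algebra
next
  case Oct show ?thesis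
  unfolding ip_def Oct by (simp add: sum8 omul_def qmul_def lo_part_def hi_part_def qconj_def bvec_def) algebra
qed

lemma unitL:
  fixes a :: "nat \<Rightarrow> 'a::comm_ring_1"
  shows "cmul C (bvec 0) a m = (if m < dim C then a m else 0)"
proof -
  have "m < 8 \<Longrightarrow> m = 0 \<or> m = 1 \<or> m = 2 \<or> m = 3 \<or> m = 4 \<or> m = 5 \<or> m = 6 \<or> m = 7" by arith
  then show ?thesis
    apply (cases C) apply (auto simp: omul_def qmul_def lo_part_def hi_part_def qconj_def bvec_def)
    apply (subgoal_tac "m = 3", simp, arith)+
    done
qed

lemma unitR:
  fixes a :: "nat \<Rightarrow> 'a::comm_ring_1"
  shows "cmul C a (bvec 0) m = (if m < dim C then a m else 0)"
proof -
  have "m < 8 \<Longrightarrow> m = 0 \<or> m = 1 \<or> m = 2 \<or> m = 3 \<or> m = 4 \<or> m = 5 \<or> m = 6 \<or> m = 7" by arith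
  then show ?thesis
    apply (cases C) apply (auto simp: omul_def qmul_def lo_part_def hi_part_def qconj_def bvec_def)
    apply (subgoal_tac "m = 3", simp, arith)+
    done
qed

lemma bvec_apply: "bvec j k = (if k = j then 1 else 0)"
  by (simp add: bvec_def)

lemma ip_bvec_right: "c < dim C \<Longrightarrow> ip C x (bvec c) = (x c :: 'a::comm_ring_1)"
  by (simp add: ip_def bvec_def if_distrib cong: if_cong)

lemma ip_bvec_bvec: "ip C (bvec j) (bvec k) = (if j = k then 1 else 0 :: 'a::comm_ring_1)" if "j < dim C"
proof (cases "k < dim C")
  case True then show ?thesis using that by (simp add: ip_bvec_right bvec_apply)
next
  case False then show ?thesis using that by (auto simp add: ip_def bvec_def intro!: sum.neutral)
qed

lemma basisI1L:
  assumes "j < dim C" "k < dim C" "c < dim C" "e < dim C"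
  shows "(\<Sum>a<dim C. cc C a j c * cc C a k e) + (\<Sum>a<dim C. cc C a k c * cc C a j e)
     = 2 * (if j = k then (if c = e then 1 else 0) else (0::'a::idom))"
  using genI1L[where C=C and p="bvec j :: nat \<Rightarrow> 'a" and q="bvec k" and u="bvec c" and v="bvec e"] assms
  by (simp add: ip_bvec_right ip_bvec_bvec sum.distrib bvec_apply)

lemma basisI1R:
  assumes "j < dim C" "k < dim C" "c < dim C" "e < dim C"
  shows "(\<Sum>a<dim C. cc C j a c * cc C k a e) + (\<Sum>a<dim C. cc C k a c * cc C j a e)
     = 2 * (if j = k then (if c = e then 1 else 0) else (0::'a::idom))"
  using genI1R[where C=C and p="bvec j :: nat \<Rightarrow> 'a" and q="bvec k" and u="bvec c" and v="bvec e"] assms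
  by (simp add: ip_bvec_right ip_bvec_bvec sum.distrib bvec_apply)

lemma basisI2:
  assumes "a < dim C" "b < dim C" "c < dim C" "e < dim C"
  shows "(\<Sum>m<dim C. cc C a c m * cc C b e m) + (\<Sum>m<dim C. cc C a e m * cc C b c m)
     = 2 * (if a = b then (if c = e then 1 else 0) else (0::'a::idom))"
  using genI2[where C=C and a="bvec a :: nat \<Rightarrow> 'a" and c="bvec c" and b="bvec b" and e="bvec e"] assms
  by (simp add: ip_bvec_right ip_bvec_bvec sum.distrib bvec_apply)

lemma unit_basisL: "j < dim C \<Longrightarrow> cc C 0 j m = (if j = m then 1 else (0::'a::comm_ring_1))"
  unfolding unitL by (auto simp: bvec_def)

lemma unit_basisR: "j < dim C \<Longrightarrow> cc C j 0 m = (if j = m then 1 else (0::'a::comm_ring_1))"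
  unfolding unitR by (auto simp: bvec_def)

lemma sym_sum:
  fixes u G :: "nat \<Rightarrow> nat \<Rightarrow> 'a::{idom,ring_char_0}"
  assumes u: "\<And>a b. a < d \<Longrightarrow> b < d \<Longrightarrow> u a b = u b a"
      and G: "\<And>a b. a < d \<Longrightarrow> b < d \<Longrightarrow> G a b + G b a = 2 * (if a = b then t else 0)"
  shows "(\<Sum>a<d. \<Sum>b<d. u a b * G a b) = t * (\<Sum>a<d. u a a)"
proof -
  let ?S = "(\<Sum>a<d. \<Sum>b<d. u a b * G a b)"
  have "(\<Sum>a<d. \<Sum>b<d. u a b * G b a) = (\<Sum>b<d. \<Sum>a<d. u a b * G b a)"
    by (rule sum.swap)
  also have "\<dots> = ?S"
    using u by (auto intro!: sum.cong)
  finally have sw: "(\<Sum>a<d. \<Sum>b<d. u a b * G b a) = ?S" .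
  have "2 * ?S = ?S + (\<Sum>a<d. \<Sum>b<d. u a b * G b a)" using sw by simp
  also have "\<dots> = (\<Sum>a<d. \<Sum>b<d. u a b * (G a b + G b a))"
    by (simp add: sum.distrib[symmetric] distrib_left)
  also have "\<dots> = (\<Sum>a<d. \<Sum>b<d. u a b * (2 * (if a = b then t else 0)))"
    using G by (auto intro!: sum.cong)
  also have "\<dots> = 2 * (t * (\<Sum>a<d. u a a))"
    by (simp add: sum_distrib_left if_distrib algebra_simps cong: if_cong)
  finally show ?thesis by simp
qed

lemma dim_pos: "0 < dim C" by (cases C) auto

lemma tmul_cong:
  assumes "\<And>I. I \<in> valid_idx C n \<Longrightarrow> x I = x' I" "\<And>I. I \<in> valid_idx C n \<Longrightarrow> y I = y' I"
  shows "tmul C n x y = tmul C n x' y'"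
  unfolding tmul_def using assms by (auto intro!: sum.cong)

lemma tmul_sum_left:
  assumes "finite S"
  shows "tmul C n (\<lambda>I. \<Sum>s\<in>S. f s I) y K = (\<Sum>s\<in>S. tmul C n (f s) y K)"
proof (cases "K \<in> valid_idx C n")
  case True
  have "tmul C n (\<lambda>I. \<Sum>s\<in>S. f s I) y K =
    (\<Sum>I\<in>valid_idx C n. \<Sum>J\<in>valid_idx C n. \<Sum>s\<in>S. f s I * y J * (\<Prod>k<n. cc C (I ! k) (J ! k) (K ! k)))"
    using True by (simp add: tmul_in sum_distrib_right)
  also have "\<dots> = (\<Sum>I\<in>valid_idx C n. \<Sum>s\<in>S. \<Sum>J\<in>valid_idx C n. f s I * y J * (\<Prod>k<n. cc C (I ! k) (J ! k) (K ! k)))"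
    by (intro sum.cong refl sum.swap)
  also have "\<dots> = (\<Sum>s\<in>S. tmul C n (f s) y K)"
    using True by (simp add: tmul_in sum.swap[of _ S])
  finally show ?thesis .
qed (simp add: tmul_out)

lemma tmul_sum_right:
  assumes "finite S"
  shows "tmul C n x (\<lambda>J. \<Sum>s\<in>S. f s J) K = (\<Sum>s\<in>S. tmul C n x (f s) K)"
proof (cases "K \<in> valid_idx C n")
  case True
  have "tmul C n x (\<lambda>J. \<Sum>s\<in>S. f s J) K =
    (\<Sum>I\<in>valid_idx C n. \<Sum>J\<in>valid_idx C n. \<Sum>s\<in>S. x I * f s J * (\<Prod>k<n. cc C (I ! k) (J ! k) (K ! k)))"
    using True by (simp add: tmul_in sum_distrib_right sum_distrib_left)
  also have "\<dots> = (\<Sum>I\<in>valid_idx C n. \<Sum>s\<in>S. \<Sum>J\<in>valid_idx C n. x I * f s J * (\<Prod>k<n. cc C (I ! k) (J ! k) (K ! k)))"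
    by (intro sum.cong refl sum.swap)
  also have "\<dots> = (\<Sum>s\<in>S. tmul C n x (f s) K)"
    using True by (simp add: tmul_in sum.swap[of _ S])
  finally show ?thesis .
qed (simp add: tmul_out)

lemma tmul_scale_left: "tmul C n (\<lambda>I. c * x I) y K = c * tmul C n x y K"
  by (simp add: tmul_def sum_distrib_left mult.assoc)

lemma tmul_scale_right: "tmul C n x (\<lambda>J. c * y J) K = c * tmul C n x y K"
  by (simp add: tmul_def sum_distrib_left algebra_simps)

lemma tmul_add_left: "tmul C n (\<lambda>I. x I + x' I) y K = tmul C n x y K + tmul C n x' y K"
  by (simp add: tmul_def sum.distrib algebra_simps)

lemma tmul_add_right: "tmul C n x (\<lambda>J. y J + y' J) K = tmul C n x y K + tmul C n x y' K"
  by (simp add: tmul_def sum.distrib algebra_simps)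

lemma tmul_zero_left: "tmul C n (\<lambda>I. 0) y K = 0"
  by (simp add: tmul_def)

lemma tmul_zero_right: "tmul C n x (\<lambda>I. 0) K = 0"
  by (simp add: tmul_def)

lemma if01_mult: "(if P then 1 else 0) * x = (if P then x else (0::'a::semiring_1))"
  by simp

lemma mult_if0: "x * (if P then y else 0) = (if P then x * y else (0::'a::semiring_0))"
  by simp

lemma sum_if_eq: "a < (d::nat) \<Longrightarrow> (\<Sum>b<d. f b * (if a = b then g b else 0)) = f a * (g a :: 'a::comm_ring_1)"
  by (simp add: if_distrib sum.delta cong: if_cong)

lemma sum_if_eq': "a < (d::nat) \<Longrightarrow> (\<Sum>b<d. (if b = a then g b else 0)) = (g a :: 'a::comm_ring_1)"
  by (simp add: sum.delta)

abbreviation one :: "cd_alg \<Rightarrow> nat \<Rightarrow> nat list \<Rightarrow> 'a::comm_ring_1" where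
  "one C n \<equiv> pure_tensor C n (replicate n (bvec 0))"

lemma one_Nil: "pure_tensor C 0 [] [] = 1"
  by (simp add: pure_tensor_def)

lemma one_Cons: "one C (Suc m) (a # R) = (if a = 0 then 1 else 0) * one C m R"
proof -
  have "(\<Prod>k<Suc m. (replicate (Suc m) (bvec 0) ! k) ((a # R) ! k)) =
        bvec 0 a * (\<Prod>k<m. (replicate m (bvec 0) ! k) (R ! k))"
    by (simp only: prod.lessThan_Suc_shift) simp
  then show ?thesis using dim_pos[of C]
    by (auto simp: pure_tensor_def bvec_apply)
qed

lemma tensor_slice: "v \<in> tensor_space C (Suc m) \<Longrightarrow> (\<lambda>I. v (b # I)) \<in> tensor_space C m"
  by (auto simp: tensor_space_def)

lemma unit_left: "v \<in> tensor_space C n \<Longrightarrow> tmul C n (one C n) v = v"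
proof (induction n arbitrary: v)
  case 0
  show ?case
  proof
    fix K show "tmul C 0 (one C 0) v K = v K"
    proof (cases "K \<in> valid_idx C 0")
      case True then have "K = []" by simp
      then show ?thesis by (simp add: tmul_in one_Nil)
    next
      case False then show ?thesis using "0.prems" by (simp add: tmul_out tensor_space_def)
    qed
  qed
next
  case (Suc m)
  show ?case
  proof
    fix K show "tmul C (Suc m) (one C (Suc m)) v K = v K"
    proof (cases "K \<in> valid_idx C (Suc m)")
      case True
      then obtain c R where K: "K = c # R" "c < dim C" "R \<in> valid_idx C m"
        by (cases K) auto
      have sl: "\<And>b. (\<lambda>I. v (b # I)) \<in> tensor_space C m" using Suc.prems by (rule tensor_slice)
      have "tmul C (Suc m) (one C (Suc m)) v K =
        (\<Sum>a<dim C. \<Sum>b<dim C. cc C a b c * tmul C m (\<lambda>I. (if a = 0 then 1 else 0) * one C m I) (\<lambda>J. v (b # J)) R)"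
        using K by (simp add: tmul_Suc one_Cons del: replicate_Suc)
      also have "\<dots> = (\<Sum>a<dim C. \<Sum>b<dim C. cc C a b c * ((if a = 0 then 1 else 0) * v (b # R)))"
        by (simp only: tmul_scale_left Suc.IH[OF sl])
      also have "\<dots> = (\<Sum>a<dim C. if a = 0 then (\<Sum>b<dim C. cc C 0 b c * v (b # R)) else 0)"
        by (intro sum.cong refl) auto
      also have "\<dots> = (\<Sum>b<dim C. cc C 0 b c * v (b # R))"
        using dim_pos[of C] by simp
      also have "\<dots> = v K"
        using K by (simp add: unit_basisL if01_mult)
      finally show ?thesis .
    next
      case False then show ?thesis using Suc.prems by (simp add: tmul_out tensor_space_def)
    qed
  qed
qed

lemma unit_right: "v \<in> tensor_space C n \<Longrightarrow> tmul C n v (one C n) = v"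
proof (induction n arbitrary: v)
  case 0
  show ?case
  proof
    fix K show "tmul C 0 v (one C 0) K = v K"
    proof (cases "K \<in> valid_idx C 0")
      case True then have "K = []" by simp
      then show ?thesis by (simp add: tmul_in one_Nil)
    next
      case False then show ?thesis using "0.prems" by (simp add: tmul_out tensor_space_def)
    qed
  qed
next
  case (Suc m)
  show ?case
  proof
    fix K show "tmul C (Suc m) v (one C (Suc m)) K = v K"
    proof (cases "K \<in> valid_idx C (Suc m)")
      case True
      then obtain c R where K: "K = c # R" "c < dim C" "R \<in> valid_idx C m"
        by (cases K) auto
      have sl: "\<And>b. (\<lambda>I. v (b # I)) \<in> tensor_space C m" using Suc.prems by (rule tensor_slice)
      have "tmul C (Suc m) v (one C (Suc m)) K =
        (\<Sum>a<dim C. \<Sum>b<dim C. cc C a b c * tmul C m (\<lambda>J. v (a # J)) (\<lambda>I. (if b = 0 then 1 else 0) * one C m I) R)"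
        using K by (simp add: tmul_Suc one_Cons del: replicate_Suc)
      also have "\<dots> = (\<Sum>a<dim C. \<Sum>b<dim C. cc C a b c * ((if b = 0 then 1 else 0) * v (a # R)))"
        by (simp only: tmul_scale_right Suc.IH[OF sl])
      also have "\<dots> = (\<Sum>a<dim C. cc C a 0 c * v (a # R))"
        using dim_pos[of C] by (simp add: if01_mult mult_if0)
      also have "\<dots> = v K"
        using K by (simp add: unit_basisR if01_mult)
      finally show ?thesis .
    next
      case False then show ?thesis using Suc.prems by (simp add: tmul_out tensor_space_def)
    qed
  qed
qed

definition tr :: "cd_alg \<Rightarrow> (nat list \<Rightarrow> 'a::comm_ring_1) \<Rightarrow> nat list \<Rightarrow> 'a" where
  "tr C x = (\<lambda>R. \<Sum>a<dim C. x (a # a # R))"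

definition dw :: "cd_alg \<Rightarrow> nat \<Rightarrow> (nat list \<Rightarrow> 'a::field) \<Rightarrow> nat list \<Rightarrow> 'a" where
  "dw C m w = (\<lambda>K. if K \<in> valid_idx C (Suc (Suc m)) then
      (if K ! 0 = K ! 1 then w (drop 2 K) / of_nat (dim C) else 0) else 0)"

definition sym12 :: "(nat list \<Rightarrow> 'a) \<Rightarrow> bool" where
  "sym12 x \<longleftrightarrow> (\<forall>a b R. x (a # b # R) = x (b # a # R))"

lemma dw_Cons: "a < dim C \<Longrightarrow> b < dim C \<Longrightarrow> R \<in> valid_idx C m \<Longrightarrow>
   dw C m w (a # b # R) = (if a = b then 1 / of_nat (dim C) else 0) * w R"
  by (simp add: dw_def)

lemma dw_out: "K \<notin> valid_idx C (Suc (Suc m)) \<Longrightarrow> dw C m w K = 0"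
  by (simp add: dw_def)

lemma valid_SS_cases:
  assumes "K \<in> valid_idx C (Suc (Suc m))"
  obtains c e S where "K = c # e # S" "c < dim C" "e < dim C" "S \<in> valid_idx C m"
  using assms by (cases K; cases "tl K") auto

lemma collapse:
  assumes "a < (d::nat)"
  shows "(\<Sum>b<d. \<Sum>b'<d'. f b b' * ((if a = b then k else 0) * g b')) = (\<Sum>b'<(d'::nat). f a b' * (k * (g b' :: 'a::comm_ring_1)))"
proof -
  have "(\<Sum>b<d. \<Sum>b'<d'. f b b' * ((if a = b then k else 0) * g b')) =
        (\<Sum>b<d. if a = b then (\<Sum>b'<d'. f a b' * (k * g b')) else 0)"
    by (intro sum.cong refl) auto
  also have "\<dots> = (\<Sum>b'<d'. f a b' * (k * g b'))" using assms by simp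
  finally show ?thesis .
qed

lemma sw3: "(\<Sum>a\<in>A. \<Sum>b\<in>B. \<Sum>c\<in>C. f a b c) = (\<Sum>b\<in>B. \<Sum>c\<in>C. \<Sum>a\<in>A. f a b c)"
proof -
  have "(\<Sum>a\<in>A. \<Sum>b\<in>B. \<Sum>c\<in>C. f a b c) = (\<Sum>b\<in>B. \<Sum>a\<in>A. \<Sum>c\<in>C. f a b c)"
    by (rule sum.swap)
  also have "\<dots> = (\<Sum>b\<in>B. \<Sum>c\<in>C. \<Sum>a\<in>A. f a b c)"
    by (intro sum.cong refl) (rule sum.swap)
  finally show ?thesis .
qed

lemma A_left:
  fixes w y :: "nat list \<Rightarrow> 'a::field_char_0"
  assumes sy: "sym12 y"
  shows "tmul C (Suc (Suc m)) (dw C m w) y = dw C m (tmul C m w (tr C y))"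
proof
  fix K show "tmul C (Suc (Suc m)) (dw C m w) y K = dw C m (tmul C m w (tr C y)) K"
  proof (cases "K \<in> valid_idx C (Suc (Suc m))")
    case False then show ?thesis by (simp add: tmul_out dw_out)
  next
    case True
    then obtain c e S where K: "K = c # e # S" "c < dim C" "e < dim C" "S \<in> valid_idx C m"
      by (rule valid_SS_cases)
    define d where "d = dim C"
    define k :: 'a where "k = 1 / of_nat d"
    define T where "T a' b' = tmul C m w (\<lambda>J. y (a' # b' # J)) S" for a' b'
    have inner: "tmul C m (\<lambda>I. dw C m w (a # b # I)) (\<lambda>J. y (a' # b' # J)) S = (if a = b then k else 0) * T a' b'"
      if "a < d" "b < d" for a b a' b'
    proof -
      have "tmul C m (\<lambda>I. dw C m w (a # b # I)) (\<lambda>J. y (a' # b' # J)) =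
            tmul C m (\<lambda>I. (if a = b then k else 0) * w I) (\<lambda>J. y (a' # b' # J))"
        by (rule tmul_cong) (use that in \<open>auto simp: dw_Cons d_def k_def\<close>)
      then show ?thesis by (simp add: tmul_scale_left T_def)
    qed
    have "tmul C (Suc (Suc m)) (dw C m w) y K =
      (\<Sum>a<d. \<Sum>a'<d. cc C a a' c * (\<Sum>b<d. \<Sum>b'<d. cc C b b' e *
          tmul C m (\<lambda>I. dw C m w (a # b # I)) (\<lambda>J. y (a' # b' # J)) S))"
      using K by (simp add: tmul_Suc d_def)
    also have "\<dots> = (\<Sum>a<d. \<Sum>a'<d. cc C a a' c * (\<Sum>b<d. \<Sum>b'<d. cc C b b' e *
          ((if a = b then k else 0) * T a' b')))"
      by (intro sum.cong refl) (simp add: inner)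
    also have "\<dots> = (\<Sum>a<d. \<Sum>a'<d. cc C a a' c * (\<Sum>b'<d. cc C a b' e * (k * T a' b')))"
      by (intro sum.cong refl) (simp add: collapse)
    also have "\<dots> = (\<Sum>a<d. \<Sum>a'<d. \<Sum>b'<d. k * (T a' b' * (cc C a a' c * cc C a b' e)))"
      by (simp add: sum_distrib_left mult_ac)
    also have "\<dots> = (\<Sum>a'<d. \<Sum>b'<d. \<Sum>a<d. k * (T a' b' * (cc C a a' c * cc C a b' e)))"
      by (rule sw3)
    also have "\<dots> = k * (\<Sum>a'<d. \<Sum>b'<d. T a' b' * (\<Sum>a<d. cc C a a' c * cc C a b' e))"
      by (simp add: sum_distrib_left)
    also have "\<dots> = k * ((if c = e then 1 else 0) * (\<Sum>a'<d. T a' a'))"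
    proof -
      have "(\<Sum>a'<d. \<Sum>b'<d. T a' b' * (\<Sum>a<d. cc C a a' c * cc C a b' e)) = (if c = e then 1 else 0) * (\<Sum>a'<d. T a' a')"
      proof (rule sym_sum)
        fix a' b' assume "a' < d" "b' < d"
        show "T a' b' = T b' a'" using sy by (simp add: T_def sym12_def)
        show "(\<Sum>a<d. cc C a a' c * cc C a b' e) + (\<Sum>a<d. cc C a b' c * cc C a a' e) =
              2 * (if a' = b' then (if c = e then 1 else 0) else (0::'a))"
          using basisI1L[of a' C b' c e] \<open>a' < d\<close> \<open>b' < d\<close> K by (simp add: d_def)
      qed
      then show ?thesis by simp
    qed
    also have "\<dots> = dw C m (tmul C m w (tr C y)) K"
      using K by (simp add: dw_Cons d_def k_def tr_def tmul_sum_right T_def)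
    finally show ?thesis .
  qed
qed

lemma collapse2:
  assumes "a < (d::nat)"
  shows "(\<Sum>b<d. f b * ((if a = b then k else 0) * g)) = f a * (k * (g :: 'a::comm_ring_1))"
proof -
  have "(\<Sum>b<d. f b * ((if a = b then k else 0) * g)) = (\<Sum>b<d. if a = b then f a * (k * g) else 0)"
    by (intro sum.cong refl) auto
  also have "\<dots> = f a * (k * g)" using assms by simp
  finally show ?thesis .
qed

lemma A_right:
  fixes w y :: "nat list \<Rightarrow> 'a::field_char_0"
  assumes sy: "sym12 y"
  shows "tmul C (Suc (Suc m)) y (dw C m w) = dw C m (tmul C m (tr C y) w)"
proof
  fix K show "tmul C (Suc (Suc m)) y (dw C m w) K = dw C m (tmul C m (tr C y) w) K"
  proof (cases "K \<in> valid_idx C (Suc (Suc m))")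
    case False then show ?thesis by (simp add: tmul_out dw_out)
  next
    case True
    then obtain c e S where K: "K = c # e # S" "c < dim C" "e < dim C" "S \<in> valid_idx C m"
      by (rule valid_SS_cases)
    define d where "d = dim C"
    define k :: 'a where "k = 1 / of_nat d"
    define T where "T a' b' = tmul C m (\<lambda>I. y (a' # b' # I)) w S" for a' b'
    have inner: "tmul C m (\<lambda>I. y (a' # b' # I)) (\<lambda>J. dw C m w (a # b # J)) S = (if a = b then k else 0) * T a' b'"
      if "a < d" "b < d" for a b a' b'
    proof -
      have "tmul C m (\<lambda>I. y (a' # b' # I)) (\<lambda>J. dw C m w (a # b # J)) =
            tmul C m (\<lambda>I. y (a' # b' # I)) (\<lambda>J. (if a = b then k else 0) * w J)"
        by (rule tmul_cong) (use that in \<open>auto simp: dw_Cons d_def k_def\<close>)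
      then show ?thesis by (simp add: tmul_scale_right T_def)
    qed
    have "tmul C (Suc (Suc m)) y (dw C m w) K =
      (\<Sum>a'<d. \<Sum>a<d. cc C a' a c * (\<Sum>b'<d. \<Sum>b<d. cc C b' b e *
          tmul C m (\<lambda>I. y (a' # b' # I)) (\<lambda>J. dw C m w (a # b # J)) S))"
      using K by (simp add: tmul_Suc d_def)
    also have "\<dots> = (\<Sum>a'<d. \<Sum>a<d. cc C a' a c * (\<Sum>b'<d. \<Sum>b<d. cc C b' b e *
          ((if a = b then k else 0) * T a' b')))"
      by (intro sum.cong refl) (simp add: inner)
    also have "\<dots> = (\<Sum>a'<d. \<Sum>a<d. cc C a' a c * (\<Sum>b'<d. cc C b' a e * (k * T a' b')))"
      by (intro sum.cong refl) (simp add: collapse2)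
    also have "\<dots> = (\<Sum>a'<d. \<Sum>a<d. \<Sum>b'<d. k * (T a' b' * (cc C a' a c * cc C b' a e)))"
      by (simp add: sum_distrib_left mult_ac)
    also have "\<dots> = (\<Sum>a'<d. \<Sum>b'<d. \<Sum>a<d. k * (T a' b' * (cc C a' a c * cc C b' a e)))"
      by (rule sum.cong[OF refl], rule sum.swap)
    also have "\<dots> = k * (\<Sum>a'<d. \<Sum>b'<d. T a' b' * (\<Sum>a<d. cc C a' a c * cc C b' a e))"
      by (simp add: sum_distrib_left)
    also have "\<dots> = k * ((if c = e then 1 else 0) * (\<Sum>a'<d. T a' a'))"
    proof -
      have "(\<Sum>a'<d. \<Sum>b'<d. T a' b' * (\<Sum>a<d. cc C a' a c * cc C b' a e)) = (if c = e then 1 else 0) * (\<Sum>a'<d. T a' a')"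
      proof (rule sym_sum)
        fix a' b' assume "a' < d" "b' < d"
        show "T a' b' = T b' a'" using sy by (simp add: T_def sym12_def)
        show "(\<Sum>a<d. cc C a' a c * cc C b' a e) + (\<Sum>a<d. cc C b' a c * cc C a' a e) =
              2 * (if a' = b' then (if c = e then 1 else 0) else (0::'a))"
          using basisI1R[of a' C b' c e] \<open>a' < d\<close> \<open>b' < d\<close> K by (simp add: d_def)
      qed
      then show ?thesis by simp
    qed
    also have "\<dots> = dw C m (tmul C m (tr C y) w) K"
      using K by (simp add: dw_Cons d_def k_def tr_def tmul_sum_left T_def)
    finally show ?thesis .
  qed
qed

lemma sw5: "(\<Sum>c\<in>C. \<Sum>a\<in>A. \<Sum>a'\<in>A'. \<Sum>b\<in>B. \<Sum>b'\<in>B'. f c a a' b b') =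
            (\<Sum>a\<in>A. \<Sum>b\<in>B. \<Sum>a'\<in>A'. \<Sum>b'\<in>B'. \<Sum>c\<in>C. f c a a' b b')"
proof -
  have "(\<Sum>c\<in>C. \<Sum>a\<in>A. \<Sum>a'\<in>A'. \<Sum>b\<in>B. \<Sum>b'\<in>B'. f c a a' b b') =
        (\<Sum>a\<in>A. \<Sum>c\<in>C. \<Sum>a'\<in>A'. \<Sum>b\<in>B. \<Sum>b'\<in>B'. f c a a' b b')" by (rule sum.swap)
  also have "\<dots> = (\<Sum>a\<in>A. \<Sum>a'\<in>A'. \<Sum>c\<in>C. \<Sum>b\<in>B. \<Sum>b'\<in>B'. f c a a' b b')"
    by (intro sum.cong refl) (rule sum.swap)
  also have "\<dots> = (\<Sum>a\<in>A. \<Sum>a'\<in>A'. \<Sum>b\<in>B. \<Sum>c\<in>C. \<Sum>b'\<in>B'. f c a a' b b')"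
    by (intro sum.cong refl) (rule sum.swap)
  also have "\<dots> = (\<Sum>a\<in>A. \<Sum>a'\<in>A'. \<Sum>b\<in>B. \<Sum>b'\<in>B'. \<Sum>c\<in>C. f c a a' b b')"
    by (intro sum.cong refl) (rule sum.swap)
  also have "\<dots> = (\<Sum>a\<in>A. \<Sum>b\<in>B. \<Sum>a'\<in>A'. \<Sum>b'\<in>B'. \<Sum>c\<in>C. f c a a' b b')"
    by (intro sum.cong refl) (rule sum.swap)
  finally show ?thesis .
qed

lemma B_trace:
  fixes x y :: "nat list \<Rightarrow> 'a::field_char_0"
  assumes sy: "sym12 y"
  shows "tr C (tmul C (Suc (Suc m)) x y) = tmul C m (tr C x) (tr C y)"
proof
  fix R show "tr C (tmul C (Suc (Suc m)) x y) R = tmul C m (tr C x) (tr C y) R"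
  proof (cases "R \<in> valid_idx C m")
    case False then show ?thesis by (simp add: tr_def tmul_out)
  next
    case True
    define d where "d = dim C"
    define X where "X a b a' b' = tmul C m (\<lambda>I. x (a # b # I)) (\<lambda>J. y (a' # b' # J)) R" for a b a' b'
    have "tr C (tmul C (Suc (Suc m)) x y) R =
       (\<Sum>c<d. \<Sum>a<d. \<Sum>a'<d. \<Sum>b<d. \<Sum>b'<d. cc C a a' c * (cc C b b' c * X a b a' b'))"
      using True by (simp add: tr_def tmul_Suc d_def X_def sum_distrib_left)
    also have "\<dots> = (\<Sum>a<d. \<Sum>b<d. \<Sum>a'<d. \<Sum>b'<d. \<Sum>c<d. cc C a a' c * (cc C b b' c * X a b a' b'))"
      by (rule sw5)
    also have "\<dots> = (\<Sum>a<d. \<Sum>b<d. \<Sum>a'<d. \<Sum>b'<d. X a b a' b' * (\<Sum>c<d. cc C a a' c * cc C b b' c))"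
      by (simp add: sum_distrib_left mult_ac)
    also have "\<dots> = (\<Sum>a<d. \<Sum>b<d. (if a = b then 1 else 0) * (\<Sum>a'<d. X a b a' a'))"
    proof (intro sum.cong refl)
      fix a b assume ab: "a \<in> {..<d}" "b \<in> {..<d}"
      show "(\<Sum>a'<d. \<Sum>b'<d. X a b a' b' * (\<Sum>c<d. cc C a a' c * cc C b b' c)) =
            (if a = b then 1 else 0) * (\<Sum>a'<d. X a b a' a')"
      proof (rule sym_sum)
        fix a' b' assume "a' < d" "b' < d"
        show "X a b a' b' = X a b b' a'" using sy by (simp add: X_def sym12_def)
        have "(\<Sum>c<d. cc C a a' c * cc C b b' c) + (\<Sum>c<d. cc C a b' c * cc C b a' c) =
              2 * (if a = b then (if a' = b' then 1 else 0) else (0::'a))"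
          using basisI2[of a C b a' b'] \<open>a' < d\<close> \<open>b' < d\<close> ab by (simp add: d_def)
        then show "(\<Sum>c<d. cc C a a' c * cc C b b' c) + (\<Sum>c<d. cc C a b' c * cc C b a' c) =
              2 * (if a' = b' then (if a = b then 1 else 0) else (0::'a))"
          by simp
      qed
    qed
    also have "\<dots> = (\<Sum>a<d. \<Sum>a'<d. X a a a' a')"
      by (simp add: if01_mult)
    also have "\<dots> = tmul C m (tr C x) (tr C y) R"
      by (simp add: tr_def tmul_sum_left tmul_sum_right X_def d_def)
    finally show ?thesis .
  qed
qed

definition pa :: "(nat \<Rightarrow> nat) \<Rightarrow> nat \<Rightarrow> nat list \<Rightarrow> nat list" where
  "pa \<sigma> n K = map (\<lambda>k. K ! \<sigma> k) [0..<n]"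

lemma perm_act_eq: "perm_act C n \<sigma> x = (\<lambda>K. if K \<in> valid_idx C n then x (pa \<sigma> n K) else 0)"
  unfolding perm_act_def pa_def by (rule refl)

lemma pa_nth: "k < n \<Longrightarrow> pa \<sigma> n K ! k = K ! \<sigma> k"
  by (simp add: pa_def)

lemma pa_length[simp]: "length (pa \<sigma> n K) = n"
  by (simp add: pa_def)

lemma pa_valid:
  assumes "\<sigma> permutes {..<n}" "K \<in> valid_idx C n"
  shows "pa \<sigma> n K \<in> valid_idx C n"
proof -
  have "\<And>k. k < n \<Longrightarrow> \<sigma> k < n" using assms(1) by (metis lessThan_iff permutes_in_image)
  then show ?thesis using assms(2)
    by (auto simp: valid_idx_def pa_def subset_iff)
qed

lemma pa_comp:
  assumes "\<sigma> permutes {..<n}"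
  shows "pa \<sigma> n (pa \<tau> n K) = pa (\<tau> \<circ> \<sigma>) n K"
proof -
  have "\<And>k. k < n \<Longrightarrow> \<sigma> k < n" using assms(1) by (metis lessThan_iff permutes_in_image)
  then show ?thesis by (auto simp: pa_def)
qed

lemma pa_id: "length K = n \<Longrightarrow> pa id n K = K"
  by (auto simp: pa_def intro: nth_equalityI)

lemma pa_bij:
  assumes "\<sigma> permutes {..<n}"
  shows "bij_betw (pa \<sigma> n) (valid_idx C n) (valid_idx C n)"
proof (rule bij_betw_byWitness[where f'="pa (inv \<sigma>) n"])
  have inv: "inv \<sigma> permutes {..<n}" using assms by (rule permutes_inv)
  show "\<forall>a\<in>valid_idx C n. pa (inv \<sigma>) n (pa \<sigma> n a) = a"
    using inv by (auto simp: pa_comp permutes_inv_o[OF assms] pa_id valid_idx_def)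
  show "\<forall>a'\<in>valid_idx C n. pa \<sigma> n (pa (inv \<sigma>) n a') = a'"
    using assms by (auto simp: pa_comp permutes_inv_o[OF assms] pa_id valid_idx_def)
  show "pa \<sigma> n ` valid_idx C n \<subseteq> valid_idx C n" using assms pa_valid by blast
  show "pa (inv \<sigma>) n ` valid_idx C n \<subseteq> valid_idx C n" using inv pa_valid by blast
qed

lemma prod_pa:
  assumes "\<sigma> permutes {..<n}"
  shows "(\<Prod>k<n. cc C (pa \<sigma> n I ! k) (pa \<sigma> n J ! k) (pa \<sigma> n K ! k)) =
         (\<Prod>k<n. (cc C (I ! k) (J ! k) (K ! k) :: 'a::comm_ring_1))"
proof -
  have "(\<Prod>k<n. cc C (pa \<sigma> n I ! k) (pa \<sigma> n J ! k) (pa \<sigma> n K ! k)) =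
        (\<Prod>k<n. ((\<lambda>k. cc C (I ! k) (J ! k) (K ! k) :: 'a) \<circ> \<sigma>) k)"
    by (intro prod.cong refl) (simp add: pa_nth)
  also have "\<dots> = (\<Prod>k<n. cc C (I ! k) (J ! k) (K ! k))"
    using prod.permute[OF assms, symmetric] by simp
  finally show ?thesis .
qed

lemma perm_tmul:
  assumes "\<sigma> permutes {..<n}"
  shows "perm_act C n \<sigma> (tmul C n x y) = tmul C n (perm_act C n \<sigma> x) (perm_act C n \<sigma> y)"
proof
  fix K show "perm_act C n \<sigma> (tmul C n x y) K = tmul C n (perm_act C n \<sigma> x) (perm_act C n \<sigma> y) K"
  proof (cases "K \<in> valid_idx C n")
    case False then show ?thesis by (simp add: perm_act_eq tmul_out)
  next
    case True
    let ?V = "valid_idx C n"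
    let ?M = "\<lambda>I J K. \<Prod>k<n. cc C (I ! k) (J ! k) (K ! k)"
    have bij: "bij_betw (pa \<sigma> n) ?V ?V" using assms by (rule pa_bij)
    have "tmul C n (perm_act C n \<sigma> x) (perm_act C n \<sigma> y) K =
       (\<Sum>I\<in>?V. \<Sum>J\<in>?V. x (pa \<sigma> n I) * y (pa \<sigma> n J) * ?M (pa \<sigma> n I) (pa \<sigma> n J) (pa \<sigma> n K))"
      using True by (simp add: tmul_in perm_act_eq prod_pa[OF assms])
    also have "\<dots> = (\<Sum>I\<in>?V. \<Sum>J\<in>?V. x I * y (pa \<sigma> n J) * ?M I (pa \<sigma> n J) (pa \<sigma> n K))"
      by (rule sum.reindex_bij_betw[OF bij, where g="\<lambda>I. \<Sum>J\<in>?V. x I * y (pa \<sigma> n J) * ?M I (pa \<sigma> n J) (pa \<sigma> n K)"])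
    also have "\<dots> = (\<Sum>I\<in>?V. \<Sum>J\<in>?V. x I * y J * ?M I J (pa \<sigma> n K))"
    proof (rule sum.cong[OF refl])
      fix I show "(\<Sum>J\<in>?V. x I * y (pa \<sigma> n J) * ?M I (pa \<sigma> n J) (pa \<sigma> n K)) = (\<Sum>J\<in>?V. x I * y J * ?M I J (pa \<sigma> n K))"
        by (rule sum.reindex_bij_betw[OF bij, where g="\<lambda>J. x I * y J * ?M I J (pa \<sigma> n K)"])
    qed
    also have "\<dots> = perm_act C n \<sigma> (tmul C n x y) K"
      using True pa_valid[OF assms True] by (simp add: tmul_in perm_act_eq)
    finally show ?thesis by simp
  qed
qed

lemma perm_perm:
  assumes "\<sigma> permutes {..<n}" "\<tau> permutes {..<n}"
  shows "perm_act C n \<sigma> (perm_act C n \<tau> x) = perm_act C n (\<sigma> \<circ> \<tau>) x"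
proof
  fix K show "perm_act C n \<sigma> (perm_act C n \<tau> x) K = perm_act C n (\<sigma> \<circ> \<tau>) x K"
    using pa_valid[OF assms(1), of K C] by (auto simp: perm_act_eq pa_comp[OF assms(2)])
qed

lemma symmetrize_sym:
  fixes x :: "nat list \<Rightarrow> 'a::field_char_0"
  shows "symmetrize C n x \<in> sym_space C n"
proof -
  let ?P = "{\<sigma>. \<sigma> permutes {..<n}}"
  have T: "symmetrize C n x \<in> tensor_space C n"
    by (simp add: tensor_space_def symmetrize_def perm_act_eq)
  have "perm_act C n \<tau> (symmetrize C n x) = symmetrize C n x" if t: "\<tau> permutes {..<n}" for \<tau>
  proof
    fix K show "perm_act C n \<tau> (symmetrize C n x) K = symmetrize C n x K"
    proof (cases "K \<in> valid_idx C n")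
      case False then show ?thesis using T by (simp add: perm_act_eq tensor_space_def)
    next
      case True
      have "perm_act C n \<tau> (symmetrize C n x) K = 1 / of_nat (fact n) * (\<Sum>\<sigma>\<in>?P. perm_act C n \<tau> (perm_act C n \<sigma> x) K)"
        using True by (simp add: symmetrize_def perm_act_eq)
      also have "\<dots> = 1 / of_nat (fact n) * (\<Sum>\<sigma>\<in>?P. perm_act C n (\<tau> \<circ> \<sigma>) x K)"
        by (simp add: perm_perm[OF t])
      also have "\<dots> = symmetrize C n x K"
        unfolding symmetrize_def using setum_permutations_compose_left[OF t, of "\<lambda>\<sigma>. perm_act C n \<sigma> x K"]
        by simp
      finally show ?thesis .
    qed
  qed
  then show ?thesis using T by (simp add: sym_space_def)
qed

lemma tmul_add_left': "tmul C n (\<lambda>I. a I + b I) y = (\<lambda>K. tmul C n a y K + tmul C n b y K)"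
  by (rule ext) (rule tmul_add_left)
lemma tmul_add_right': "tmul C n x (\<lambda>I. a I + b I) = (\<lambda>K. tmul C n x a K + tmul C n x b K)"
  by (rule ext) (rule tmul_add_right)
lemma tmul_scale_left': "tmul C n (\<lambda>I. c * a I) y = (\<lambda>K. c * tmul C n a y K)"
  by (rule ext) (rule tmul_scale_left)
lemma tmul_scale_right': "tmul C n x (\<lambda>I. c * a I) = (\<lambda>K. c * tmul C n x a K)"
  by (rule ext) (rule tmul_scale_right)
lemma tmul_zero_left': "tmul C n (\<lambda>I. 0) y = (\<lambda>K. 0)"
  by (rule ext) (rule tmul_zero_left)
lemma tmul_zero_right': "tmul C n x (\<lambda>I. 0) = (\<lambda>K. 0)"
  by (rule ext) (rule tmul_zero_right)

definition ca :: "cd_alg \<Rightarrow> nat \<Rightarrow> (nat list \<Rightarrow> 'a::comm_ring_1) \<Rightarrow> bool" where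
  "ca C n z \<longleftrightarrow> (\<forall>x\<in>sym_space C n. comm_assoc C n z x (sym_space C n))"

lemma sym_tensor: "x \<in> sym_space C n \<Longrightarrow> x \<in> tensor_space C n"
  by (simp add: sym_space_def)

lemma sym_fix: "x \<in> sym_space C n \<Longrightarrow> \<sigma> permutes {..<n} \<Longrightarrow> perm_act C n \<sigma> x = x"
  by (simp add: sym_space_def)

lemma tmul_tensor: "tmul C n x y \<in> tensor_space C n"
  by (simp add: tensor_space_def tmul_out)

lemma sym_tmul: "x \<in> sym_space C n \<Longrightarrow> y \<in> sym_space C n \<Longrightarrow> tmul C n x y \<in> sym_space C n"
  by (simp add: sym_space_def tmul_tensor perm_tmul)

lemma sym_act_eq: "x \<in> sym_space C n \<Longrightarrow> \<sigma> permutes {..<n} \<Longrightarrow> K \<in> valid_idx C n \<Longrightarrow> x (pa \<sigma> n K) = x K"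
  using fun_cong[OF sym_fix[of x C n \<sigma>], of K] by (simp add: perm_act_eq)

lemma sym_add: "x \<in> sym_space C n \<Longrightarrow> y \<in> sym_space C n \<Longrightarrow> (\<lambda>K. x K + y K) \<in> sym_space C n"
  unfolding sym_space_def[of C n] mem_Collect_eq
  by (auto simp: tensor_space_def perm_act_eq fun_eq_iff sym_act_eq sym_space_def)

lemma sym_scale: "x \<in> sym_space C n \<Longrightarrow> (\<lambda>K. c * x K) \<in> sym_space C n"
  unfolding sym_space_def[of C n] mem_Collect_eq
  by (auto simp: tensor_space_def perm_act_eq fun_eq_iff sym_act_eq sym_space_def)

lemma ca_zero: "ca C n (\<lambda>K. 0)"
  by (simp add: ca_def comm_assoc_def tmul_zero_left' tmul_zero_right')

lemma ca_add:
  fixes a b :: "nat list \<Rightarrow> 'a::comm_ring_1"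
  assumes A: "ca C n a" and B: "ca C n b"
  shows "ca C n (\<lambda>K. a K + b K)"
  unfolding ca_def comm_assoc_def
proof (intro ballI conjI)
  fix x :: "nat list \<Rightarrow> 'a" assume x: "x \<in> sym_space C n"
  have ax: "comm_assoc C n a x (sym_space C n)" "comm_assoc C n b x (sym_space C n)"
    using A B x by (auto simp: ca_def)
  then show "tmul C n (\<lambda>K. a K + b K) x = tmul C n x (\<lambda>K. a K + b K)"
    by (simp only: comm_assoc_def tmul_add_left' tmul_add_right')
  fix y :: "nat list \<Rightarrow> 'a" assume y: "y \<in> sym_space C n"
  have e: "tmul C n (tmul C n a x) y = tmul C n a (tmul C n x y)"
          "tmul C n (tmul C n x a) y = tmul C n x (tmul C n a y)"
          "tmul C n (tmul C n x y) a = tmul C n x (tmul C n y a)"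
          "tmul C n (tmul C n b x) y = tmul C n b (tmul C n x y)"
          "tmul C n (tmul C n x b) y = tmul C n x (tmul C n b y)"
          "tmul C n (tmul C n x y) b = tmul C n x (tmul C n y b)"
    using ax y by (auto simp: comm_assoc_def)
  show "tmul C n (tmul C n (\<lambda>K. a K + b K) x) y = tmul C n (\<lambda>K. a K + b K) (tmul C n x y)"
    by (simp only: tmul_add_left' tmul_add_right' e)
  show "tmul C n (tmul C n x (\<lambda>K. a K + b K)) y = tmul C n x (tmul C n (\<lambda>K. a K + b K) y)"
    by (simp only: tmul_add_left' tmul_add_right' e)
  show "tmul C n (tmul C n x y) (\<lambda>K. a K + b K) = tmul C n x (tmul C n y (\<lambda>K. a K + b K))"
    by (simp only: tmul_add_left' tmul_add_right' e)
qed

lemma ca_scale: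
  fixes a :: "nat list \<Rightarrow> 'a::comm_ring_1"
  assumes A: "ca C n a"
  shows "ca C n (\<lambda>K. c * a K)"
  unfolding ca_def comm_assoc_def
proof (intro ballI conjI)
  fix x :: "nat list \<Rightarrow> 'a" assume x: "x \<in> sym_space C n"
  have ax: "comm_assoc C n a x (sym_space C n)"
    using A x by (auto simp: ca_def)
  then show "tmul C n (\<lambda>K. c * a K) x = tmul C n x (\<lambda>K. c * a K)"
    by (simp only: comm_assoc_def tmul_scale_left' tmul_scale_right')
  fix y :: "nat list \<Rightarrow> 'a" assume y: "y \<in> sym_space C n"
  have e: "tmul C n (tmul C n a x) y = tmul C n a (tmul C n x y)"
          "tmul C n (tmul C n x a) y = tmul C n x (tmul C n a y)"
          "tmul C n (tmul C n x y) a = tmul C n x (tmul C n y a)"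
    using ax y by (auto simp: comm_assoc_def)
  show "tmul C n (tmul C n (\<lambda>K. c * a K) x) y = tmul C n (\<lambda>K. c * a K) (tmul C n x y)"
    by (simp only: tmul_scale_left' tmul_scale_right' e)
  show "tmul C n (tmul C n x (\<lambda>K. c * a K)) y = tmul C n x (tmul C n (\<lambda>K. c * a K) y)"
    by (simp only: tmul_scale_left' tmul_scale_right' e)
  show "tmul C n (tmul C n x y) (\<lambda>K. c * a K) = tmul C n x (tmul C n y (\<lambda>K. c * a K))"
    by (simp only: tmul_scale_left' tmul_scale_right' e)
qed

lemma ca_sum: "finite S \<Longrightarrow> (\<And>s. s \<in> S \<Longrightarrow> ca C n (f s)) \<Longrightarrow> ca C n (\<lambda>K. \<Sum>s\<in>S. f s K)"
proof (induction S rule: finite_induct)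
  case empty then show ?case using ca_zero by simp
next
  case (insert a F)
  have "ca C n (\<lambda>K. f a K + (\<Sum>s\<in>F. f s K))"
    using insert by (intro ca_add) auto
  then show ?case using insert by simp
qed

lemma ca_perm:
  fixes z :: "nat list \<Rightarrow> 'a::comm_ring_1"
  assumes s: "\<sigma> permutes {..<n}" and z: "ca C n z"
  shows "ca C n (perm_act C n \<sigma> z)"
  unfolding ca_def comm_assoc_def
proof (intro ballI conjI)
  fix x :: "nat list \<Rightarrow> 'a" assume x: "x \<in> sym_space C n"
  have hx: "perm_act C n \<sigma> x = x" using x s by (rule sym_fix)
  have zx: "comm_assoc C n z x (sym_space C n)" using z x by (simp add: ca_def)
  show "tmul C n (perm_act C n \<sigma> z) x = tmul C n x (perm_act C n \<sigma> z)"
  proof -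
    have "tmul C n (perm_act C n \<sigma> z) x = perm_act C n \<sigma> (tmul C n z x)" by (simp add: perm_tmul[OF s] hx)
    also have "\<dots> = perm_act C n \<sigma> (tmul C n x z)" using zx by (simp add: comm_assoc_def)
    also have "\<dots> = tmul C n x (perm_act C n \<sigma> z)" by (simp add: perm_tmul[OF s] hx)
    finally show ?thesis .
  qed
  fix y :: "nat list \<Rightarrow> 'a" assume y: "y \<in> sym_space C n"
  have hy: "perm_act C n \<sigma> y = y" using y s by (rule sym_fix)
  have hxy: "perm_act C n \<sigma> (tmul C n x y) = tmul C n x y" using sym_tmul[OF x y] s by (rule sym_fix)
  have e: "tmul C n (tmul C n z x) y = tmul C n z (tmul C n x y)"
          "tmul C n (tmul C n x z) y = tmul C n x (tmul C n z y)"
          "tmul C n (tmul C n x y) z = tmul C n x (tmul C n y z)"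
    using zx y by (auto simp: comm_assoc_def)
  show "tmul C n (tmul C n (perm_act C n \<sigma> z) x) y = tmul C n (perm_act C n \<sigma> z) (tmul C n x y)"
  proof -
    have "tmul C n (tmul C n (perm_act C n \<sigma> z) x) y = perm_act C n \<sigma> (tmul C n (tmul C n z x) y)"
      by (simp add: perm_tmul[OF s] hx hy)
    also have "\<dots> = perm_act C n \<sigma> (tmul C n z (tmul C n x y))" using e by simp
    also have "\<dots> = tmul C n (perm_act C n \<sigma> z) (tmul C n x y)"
      by (simp only: perm_tmul[OF s] hx hy)
    finally show ?thesis .
  qed
  show "tmul C n (tmul C n x (perm_act C n \<sigma> z)) y = tmul C n x (tmul C n (perm_act C n \<sigma> z) y)"
  proof -
    have "tmul C n (tmul C n x (perm_act C n \<sigma> z)) y = perm_act C n \<sigma> (tmul C n (tmul C n x z) y)"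
      by (simp add: perm_tmul[OF s] hx hy)
    also have "\<dots> = perm_act C n \<sigma> (tmul C n x (tmul C n z y))" using e by simp
    also have "\<dots> = tmul C n x (tmul C n (perm_act C n \<sigma> z) y)"
      by (simp add: perm_tmul[OF s] hx hy)
    finally show ?thesis .
  qed
  show "tmul C n (tmul C n x y) (perm_act C n \<sigma> z) = tmul C n x (tmul C n y (perm_act C n \<sigma> z))"
  proof -
    have "tmul C n (tmul C n x y) (perm_act C n \<sigma> z) = perm_act C n \<sigma> (tmul C n (tmul C n x y) z)"
      by (simp only: perm_tmul[OF s] hx hy)
    also have "\<dots> = perm_act C n \<sigma> (tmul C n x (tmul C n y z))" using e by simp
    also have "\<dots> = tmul C n x (tmul C n y (perm_act C n \<sigma> z))"
      by (simp add: perm_tmul[OF s] hx hy)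
    finally show ?thesis .
  qed
qed

lemma pt2:
  assumes "c < dim C" "e < dim C" "S \<in> valid_idx C m"
  shows "pure_tensor C (Suc (Suc m)) (v1 # v2 # replicate m (bvec 0)) (c # e # S) =
         v1 c * (v2 e * (one C m S :: 'a::comm_ring_1))"
proof -
  have "(\<Prod>k<Suc (Suc m). ((v1 # v2 # replicate m (bvec 0)) ! k) ((c # e # S) ! k)) =
        v1 c * (v2 e * (\<Prod>k<m. (replicate m (bvec 0) ! k) (S ! k)))"
    by (simp only: prod.lessThan_Suc_shift) simp
  then show ?thesis using assms by (simp add: pure_tensor_def)
qed

lemma delta_one_eq: "delta_one C (Suc (Suc m)) = (dw C m (one C m) :: nat list \<Rightarrow> 'a::field_char_0)"
proof
  fix K show "delta_one C (Suc (Suc m)) K = (dw C m (one C m) K :: 'a)"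
  proof (cases "K \<in> valid_idx C (Suc (Suc m))")
    case False then show ?thesis by (simp add: delta_one_def dw_out pure_tensor_def)
  next
    case True
    then obtain c e S where K: "K = c # e # S" "c < dim C" "e < dim C" "S \<in> valid_idx C m"
      by (rule valid_SS_cases)
    have "delta_one C (Suc (Suc m)) K = (1 / of_nat (dim C)) *
        (\<Sum>i<dim C. bvec i c * (bvec i e * (one C m S :: 'a)))"
      using K by (simp add: delta_one_def pt2)
    also have "\<dots> = (1 / of_nat (dim C)) * (\<Sum>i<dim C. if i = c then (if c = e then one C m S else 0) else 0)"
      by (intro arg_cong2[where f="(*)"] refl sum.cong) (auto simp: bvec_apply)
    also have "\<dots> = dw C m (one C m) K"
      using K by (simp add: dw_Cons)
    finally show ?thesis .
  qed
qed

lemma sym12_of_sym: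
  assumes x: "x \<in> sym_space C (Suc (Suc m))"
  shows "sym12 x"
  unfolding sym12_def
proof (intro allI)
  fix a b R
  let ?t = "transpose (0::nat) 1"
  have t: "?t permutes {..<Suc (Suc m)}" by (rule permutes_swap_id) auto
  show "x (a # b # R) = x (b # a # R)"
  proof (cases "a # b # R \<in> valid_idx C (Suc (Suc m))")
    case True
    then have lenR: "length R = m" by (simp add: valid_idx_def)
    have "pa ?t (Suc (Suc m)) (a # b # R) = b # a # R"
    proof (rule nth_equalityI)
      show "length (pa ?t (Suc (Suc m)) (a # b # R)) = length (b # a # R)" using lenR by simp
      fix k assume "k < length (pa ?t (Suc (Suc m)) (a # b # R))"
      then have k: "k < Suc (Suc m)" by simp
      show "pa ?t (Suc (Suc m)) (a # b # R) ! k = (b # a # R) ! k"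
        using k by (cases k; cases "k - 1") (auto simp: pa_nth transpose_def)
    qed
    then show ?thesis using sym_act_eq[OF x t True] by simp
  next
    case False
    then have "b # a # R \<notin> valid_idx C (Suc (Suc m))" by auto
    then show ?thesis using False sym_tensor[OF x] by (simp add: tensor_space_def)
  qed
qed

lemma tr_tensor: "x \<in> tensor_space C (Suc (Suc m)) \<Longrightarrow> tr C x \<in> tensor_space C m"
  by (simp add: tensor_space_def tr_def)

lemma ca_D: "ca C (Suc (Suc m)) (delta_one C (Suc (Suc m)) :: nat list \<Rightarrow> 'a::field_char_0)"
  unfolding ca_def comm_assoc_def delta_one_eq
proof (intro ballI conjI)
  let ?n = "Suc (Suc m)"
  fix x :: "nat list \<Rightarrow> 'a" assume x: "x \<in> sym_space C ?n"
  have sx: "sym12 x" using x by (rule sym12_of_sym)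
  have tx: "tr C x \<in> tensor_space C m" using sym_tensor[OF x] by (rule tr_tensor)
  have Dx: "tmul C ?n (dw C m (one C m)) x = dw C m (tr C x)"
    by (simp add: A_left[OF sx] unit_left[OF tx])
  have xD: "tmul C ?n x (dw C m (one C m)) = dw C m (tr C x)"
    by (simp add: A_right[OF sx] unit_right[OF tx])
  show "tmul C ?n (dw C m (one C m)) x = tmul C ?n x (dw C m (one C m))" by (simp add: Dx xD)
  fix y :: "nat list \<Rightarrow> 'a" assume y: "y \<in> sym_space C ?n"
  have sy: "sym12 y" using y by (rule sym12_of_sym)
  have ty: "tr C y \<in> tensor_space C m" using sym_tensor[OF y] by (rule tr_tensor)
  have xy: "tmul C ?n x y \<in> sym_space C ?n" using x y by (rule sym_tmul)
  have sxy: "sym12 (tmul C ?n x y)" using xy by (rule sym12_of_sym)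
  have txy: "tr C (tmul C ?n x y) \<in> tensor_space C m" using sym_tensor[OF xy] by (rule tr_tensor)
  have Bxy: "tr C (tmul C ?n x y) = tmul C m (tr C x) (tr C y)" using sy by (rule B_trace)
  have Dy: "tmul C ?n (dw C m (one C m)) y = dw C m (tr C y)"
    by (simp add: A_left[OF sy] unit_left[OF ty])
  have yD: "tmul C ?n y (dw C m (one C m)) = dw C m (tr C y)"
    by (simp add: A_right[OF sy] unit_right[OF ty])
  show "tmul C ?n (tmul C ?n (dw C m (one C m)) x) y = tmul C ?n (dw C m (one C m)) (tmul C ?n x y)"
    by (simp add: Dx A_left[OF sy] A_left[OF sxy] unit_left[OF txy] Bxy unit_left[OF tmul_tensor])
  show "tmul C ?n (tmul C ?n x (dw C m (one C m))) y = tmul C ?n x (tmul C ?n (dw C m (one C m)) y)"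
    by (simp add: xD Dy A_left[OF sy] A_right[OF sx] unit_left[OF ty] unit_right[OF tx])
  show "tmul C ?n (tmul C ?n x y) (dw C m (one C m)) = tmul C ?n x (tmul C ?n y (dw C m (one C m)))"
    by (simp add: yD A_right[OF sx] A_right[OF sxy] unit_right[OF txy] Bxy unit_right[OF ty] unit_right[OF tmul_tensor])
qed

lemma ca_delta_n:
  assumes "n \<ge> 2"
  shows "ca C n (delta_n C n :: nat list \<Rightarrow> 'a::field_char_0)"
proof -
  obtain m where n: "n = Suc (Suc m)" using assms by (metis add_2_eq_Suc le_Suc_ex)
  have D: "ca C n (delta_one C n :: nat list \<Rightarrow> 'a)" unfolding n by (rule ca_D)
  have "ca C n (\<lambda>K. 1 / of_nat (fact n) *
      (\<Sum>\<sigma>\<in>{\<sigma>. \<sigma> permutes {..<n}}. perm_act C n \<sigma> (delta_one C n :: nat list \<Rightarrow> 'a) K))"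
    by (intro ca_scale ca_sum finite_permutations) (auto intro: ca_perm D)
  then show ?thesis by (simp add: delta_n_def symmetrize_def)
qed

lemma delta_n_sym: "(delta_n C n :: nat list \<Rightarrow> 'a::field_char_0) \<in> sym_space C n"
  unfolding delta_n_def by (rule symmetrize_sym)

lemma one_apply: "K \<in> valid_idx C n \<Longrightarrow> one C n K = (\<Prod>k<n. bvec 0 (K ! k))"
  by (simp add: pure_tensor_def)

lemma one_sym: "(one C n :: nat list \<Rightarrow> 'a::comm_ring_1) \<in> sym_space C n"
proof -
  have T: "(one C n :: nat list \<Rightarrow> 'a) \<in> tensor_space C n" by (simp add: tensor_space_def pure_tensor_def)
  have "perm_act C n \<sigma> (one C n) = (one C n :: nat list \<Rightarrow> 'a)" if s: "\<sigma> permutes {..<n}" for \<sigma>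
  proof
    fix K show "perm_act C n \<sigma> (one C n) K = (one C n K :: 'a)"
    proof (cases "K \<in> valid_idx C n")
      case True
      have "(one C n (pa \<sigma> n K) :: 'a) = (\<Prod>k<n. ((\<lambda>k. bvec 0 (K ! k)) \<circ> \<sigma>) k)"
        using pa_valid[OF s True] by (simp add: one_apply pa_nth)
      also have "\<dots> = (\<Prod>k<n. bvec 0 (K ! k))"
        using prod.permute[OF s, symmetric] by simp
      finally show ?thesis using True by (simp add: perm_act_eq one_apply)
    qed (simp add: perm_act_eq pure_tensor_def)
  qed
  then show ?thesis using T by (simp add: sym_space_def)
qed

lemma ca_one: "ca C n (one C n :: nat list \<Rightarrow> 'a::comm_ring_1)"
  unfolding ca_def comm_assoc_def
  by (auto simp: unit_left unit_right sym_tensor tmul_tensor)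

definition Zc :: "cd_alg \<Rightarrow> nat \<Rightarrow> (nat list \<Rightarrow> 'a::comm_ring_1) set" where
  "Zc C n = {z. z \<in> sym_space C n \<and> ca C n z}"

lemma Z_tmul:
  fixes a b :: "nat list \<Rightarrow> 'a::comm_ring_1"
  assumes A: "a \<in> Zc C n" and B: "b \<in> Zc C n"
  shows "tmul C n a b \<in> Zc C n"
proof -
  have aS: "a \<in> sym_space C n" and bS: "b \<in> sym_space C n" using A B by (auto simp: Zc_def)
  have aC: "\<And>u. u \<in> sym_space C n \<Longrightarrow> tmul C n a u = tmul C n u a"
   and a1: "\<And>u v. u \<in> sym_space C n \<Longrightarrow> v \<in> sym_space C n \<Longrightarrow> tmul C n (tmul C n a u) v = tmul C n a (tmul C n u v)"
   and a2: "\<And>u v. u \<in> sym_space C n \<Longrightarrow> v \<in> sym_space C n \<Longrightarrow> tmul C n (tmul C n u a) v = tmul C n u (tmul C n a v)"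
   and a3: "\<And>u v. u \<in> sym_space C n \<Longrightarrow> v \<in> sym_space C n \<Longrightarrow> tmul C n (tmul C n u v) a = tmul C n u (tmul C n v a)"
    using A unfolding Zc_def ca_def comm_assoc_def mem_Collect_eq by blast+
  have bC: "\<And>u. u \<in> sym_space C n \<Longrightarrow> tmul C n b u = tmul C n u b"
   and b1: "\<And>u v. u \<in> sym_space C n \<Longrightarrow> v \<in> sym_space C n \<Longrightarrow> tmul C n (tmul C n b u) v = tmul C n b (tmul C n u v)"
   and b2: "\<And>u v. u \<in> sym_space C n \<Longrightarrow> v \<in> sym_space C n \<Longrightarrow> tmul C n (tmul C n u b) v = tmul C n u (tmul C n b v)"
   and b3: "\<And>u v. u \<in> sym_space C n \<Longrightarrow> v \<in> sym_space C n \<Longrightarrow> tmul C n (tmul C n u v) b = tmul C n u (tmul C n v b)"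
    using B unfolding Zc_def ca_def comm_assoc_def mem_Collect_eq by blast+
  note S = sym_tmul[of _ C n]
  have "ca C n (tmul C n a b)"
    unfolding ca_def comm_assoc_def
  proof (intro ballI conjI)
    fix x :: "nat list \<Rightarrow> 'a" assume x: "x \<in> sym_space C n"
    show "tmul C n (tmul C n a b) x = tmul C n x (tmul C n a b)"
    proof -
      have "tmul C n (tmul C n a b) x = tmul C n a (tmul C n b x)" using a1[OF bS x] .
      also have "\<dots> = tmul C n a (tmul C n x b)" using bC[OF x] by simp
      also have "\<dots> = tmul C n (tmul C n a x) b" using a1[OF x bS] by simp
      also have "\<dots> = tmul C n (tmul C n x a) b" using aC[OF x] by simp
      also have "\<dots> = tmul C n x (tmul C n a b)" using a2[OF x bS] .
      finally show ?thesis .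
    qed
    fix y :: "nat list \<Rightarrow> 'a" assume y: "y \<in> sym_space C n"
    show "tmul C n (tmul C n (tmul C n a b) x) y = tmul C n (tmul C n a b) (tmul C n x y)"
    proof -
      have "tmul C n (tmul C n (tmul C n a b) x) y = tmul C n (tmul C n a (tmul C n b x)) y"
        using a1[OF bS x] by simp
      also have "\<dots> = tmul C n a (tmul C n (tmul C n b x) y)" using a1[OF S[OF bS x] y] .
      also have "\<dots> = tmul C n a (tmul C n b (tmul C n x y))" using b1[OF x y] by simp
      also have "\<dots> = tmul C n (tmul C n a b) (tmul C n x y)" using a1[OF bS S[OF x y]] by simp
      finally show ?thesis .
    qed
    show "tmul C n (tmul C n x (tmul C n a b)) y = tmul C n x (tmul C n (tmul C n a b) y)"
    proof -
      have "tmul C n (tmul C n x (tmul C n a b)) y = tmul C n (tmul C n (tmul C n x a) b) y"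
        using a2[OF x bS] by simp
      also have "\<dots> = tmul C n (tmul C n x a) (tmul C n b y)" using b2[OF S[OF x aS] y] .
      also have "\<dots> = tmul C n x (tmul C n a (tmul C n b y))" using a2[OF x S[OF bS y]] .
      also have "\<dots> = tmul C n x (tmul C n (tmul C n a b) y)" using a1[OF bS y] by simp
      finally show ?thesis .
    qed
    show "tmul C n (tmul C n x y) (tmul C n a b) = tmul C n x (tmul C n y (tmul C n a b))"
    proof -
      have "tmul C n (tmul C n x y) (tmul C n a b) = tmul C n (tmul C n (tmul C n x y) a) b"
        using a2[OF S[OF x y] bS] by simp
      also have "\<dots> = tmul C n (tmul C n x (tmul C n y a)) b" using a3[OF x y] by simp
      also have "\<dots> = tmul C n x (tmul C n (tmul C n y a) b)" using b3[OF x S[OF y aS]] .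
      also have "\<dots> = tmul C n x (tmul C n y (tmul C n a b))" using a2[OF y bS] by simp
      finally show ?thesis .
    qed
  qed
  then show ?thesis using S[OF aS bS] by (simp add: Zc_def)
qed

lemma gen_alg_Z:
  fixes z :: "nat list \<Rightarrow> 'a::comm_ring_1"
  assumes "w \<in> gen_alg C n z" "z \<in> Zc C n"
  shows "w \<in> Zc C n"
  using assms
proof (induction rule: gen_alg.induct)
  case gen_one then show ?case by (simp add: Zc_def one_sym ca_one)
next
  case gen_base then show ?case .
next
  case (gen_add a b) then show ?case by (simp add: Zc_def sym_add ca_add)
next
  case (gen_smult a c) then show ?case by (simp add: Zc_def sym_scale ca_scale)
next
  case (gen_mult a b) then show ?case by (simp add: Z_tmul)
qed

lemma main_generic:
  assumes "n \<ge> 2"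
  shows
    "(\<forall>x\<in>sym_space C n. comm_assoc C n (delta_one C n :: nat list \<Rightarrow> 'a::field_char_0) x (sym_space C n))
   \<and> (delta_n C n :: nat list \<Rightarrow> 'a) \<in> sym_space C n
   \<and> (\<forall>x\<in>sym_space C n. comm_assoc C n (delta_n C n :: nat list \<Rightarrow> 'a) x (sym_space C n))
   \<and> (\<forall>a\<in>gen_alg C n (delta_n C n :: nat list \<Rightarrow> 'a). \<forall>b\<in>gen_alg C n (delta_n C n).
        \<forall>c\<in>gen_alg C n (delta_n C n).
          tmul C n a b = tmul C n b a \<and> tmul C n (tmul C n a b) c = tmul C n a (tmul C n b c))"
proof (intro conjI)
  obtain m where n: "n = Suc (Suc m)" using assms by (metis add_2_eq_Suc le_Suc_ex)
  show "\<forall>x\<in>sym_space C n. comm_assoc C n (delta_one C n :: nat list \<Rightarrow> 'a) x (sym_space C n)"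
    using ca_D[of C m] unfolding n ca_def by blast
  show "(delta_n C n :: nat list \<Rightarrow> 'a) \<in> sym_space C n" by (rule delta_n_sym)
  show "\<forall>x\<in>sym_space C n. comm_assoc C n (delta_n C n :: nat list \<Rightarrow> 'a) x (sym_space C n)"
    using ca_delta_n[OF assms] unfolding ca_def by blast
  have Z: "(delta_n C n :: nat list \<Rightarrow> 'a) \<in> Zc C n"
    by (simp add: Zc_def ca_delta_n[OF assms] delta_n_sym)
  show "\<forall>a\<in>gen_alg C n (delta_n C n :: nat list \<Rightarrow> 'a). \<forall>b\<in>gen_alg C n (delta_n C n).
        \<forall>c\<in>gen_alg C n (delta_n C n).
          tmul C n a b = tmul C n b a \<and> tmul C n (tmul C n a b) c = tmul C n a (tmul C n b c)"
  proof (intro ballI conjI)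
    fix a b c assume a: "a \<in> gen_alg C n (delta_n C n :: nat list \<Rightarrow> 'a)"
      and b: "b \<in> gen_alg C n (delta_n C n :: nat list \<Rightarrow> 'a)"
      and c: "c \<in> gen_alg C n (delta_n C n :: nat list \<Rightarrow> 'a)"
    have aZ: "a \<in> Zc C n" using a Z by (rule gen_alg_Z)
    have bS: "b \<in> sym_space C n" using gen_alg_Z[OF b Z] by (simp add: Zc_def)
    have cS: "c \<in> sym_space C n" using gen_alg_Z[OF c Z] by (simp add: Zc_def)
    have "comm_assoc C n a b (sym_space C n)" using aZ bS by (simp add: Zc_def ca_def)
    then show "tmul C n a b = tmul C n b a" "tmul C n (tmul C n a b) c = tmul C n a (tmul C n b c)"
      using cS by (auto simp: comm_assoc_def)
  qed
qed

theorem lemma2p8: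
  fixes C :: cd_alg and n :: nat
  assumes "n \<ge> 2"
  shows
    "(\<forall>x\<in>sym_space C n. comm_assoc C n (delta_one C n :: nat list \<Rightarrow> real) x (sym_space C n))
   \<and> (delta_n C n :: nat list \<Rightarrow> real) \<in> sym_space C n
   \<and> (\<forall>x\<in>sym_space C n. comm_assoc C n (delta_n C n :: nat list \<Rightarrow> real) x (sym_space C n))
   \<and> (\<forall>a\<in>gen_alg C n (delta_n C n :: nat list \<Rightarrow> real). \<forall>b\<in>gen_alg C n (delta_n C n).
        \<forall>c\<in>gen_alg C n (delta_n C n).
          tmul C n a b = tmul C n b a \<and> tmul C n (tmul C n a b) c = tmul C n a (tmul C n b c))
   \<and> (\<forall>x\<in>sym_space C n. comm_assoc C n (delta_one C n :: nat list \<Rightarrow> complex) x (sym_space C n))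
   \<and> (delta_n C n :: nat list \<Rightarrow> complex) \<in> sym_space C n
   \<and> (\<forall>x\<in>sym_space C n. comm_assoc C n (delta_n C n :: nat list \<Rightarrow> complex) x (sym_space C n))
   \<and> (\<forall>a\<in>gen_alg C n (delta_n C n :: nat list \<Rightarrow> complex). \<forall>b\<in>gen_alg C n (delta_n C n).
        \<forall>c\<in>gen_alg C n (delta_n C n).
          tmul C n a b = tmul C n b a \<and> tmul C n (tmul C n a b) c = tmul C n a (tmul C n b c))"
  using main_generic[OF assms, where 'a=real] main_generic[OF assms, where 'a=complex]
  by blast


end
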